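(* There exists a finite simple graph $G$ such that $4=\pi'(G)<\chi'(G)=5$.
   Context: An orthogonal $d$-edge-coloring of $G$ is a function $f:E(G)\to\mathbb{R}^d\setminus\{0\}$ such that $f(e)\perp f(e')$ whenever the distinct edges $e,e'$ share an endpoint. The orthogonal index $\pi'(G)$ is the minimum $d$ for which $G$ has an orthogonal $d$-edge-coloring. $\chi'(G)$ is the chromatic index. *)

theory Defs
  imports Complex_Main
begin

definition simple_graph :: "'a set \<Rightarrow> 'a set set \<Rightarrow> bool" where
  "simple_graph V E \<longleftrightarrow> finite V \<and> (\<forall>e\<in>E. e \<subseteq> V \<and> card e = 2)"

text \<open>Vectors of R^d are represented as functions nat => real vanishing outside {..<d};
  the standard inner product is the sum over i < d.\<close>
definition orthogonal_edge_coloring :: "'a set set \<Rightarrow> nat \<Rightarrow> ('a set \<Rightarrow> nat \<Rightarrow> real) \<Rightarrow> bool" where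
  "orthogonal_edge_coloring E d f \<longleftrightarrow>
     (\<forall>e\<in>E. (\<forall>i\<ge>d. f e i = 0) \<and> (\<exists>i<d. f e i \<noteq> 0)) \<and>
     (\<forall>e\<in>E. \<forall>e'\<in>E. e \<noteq> e' \<and> e \<inter> e' \<noteq> {} \<longrightarrow> (\<Sum>i<d. f e i * f e' i) = 0)"

definition orthogonal_index :: "'a set set \<Rightarrow> nat" where
  "orthogonal_index E = (LEAST d. \<exists>f. orthogonal_edge_coloring E d f)"

definition proper_edge_coloring :: "'a set set \<Rightarrow> nat \<Rightarrow> ('a set \<Rightarrow> nat) \<Rightarrow> bool" where
  "proper_edge_coloring E k c \<longleftrightarrow>
     (\<forall>e\<in>E. c e < k) \<and>
     (\<forall>e\<in>E. \<forall>e'\<in>E. e \<noteq> e' \<and> e \<inter> e' \<noteq> {} \<longrightarrow> c e \<noteq> c e')"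

definition chromatic_index :: "'a set set \<Rightarrow> nat" where
  "chromatic_index E = (LEAST k. \<exists>c. proper_edge_coloring E k c)"

end

theory Submission
  imports Defs "HOL-Analysis.Analysis"
begin

lemma four_orth_R3:
  fixes a b c d :: "real \<times> real \<times> real"
  assumes "a \<noteq> 0" "b \<noteq> 0" "c \<noteq> 0" "d \<noteq> 0"
    "a \<bullet> b = 0" "a \<bullet> c = 0" "a \<bullet> d = 0" "b \<bullet> c = 0" "b \<bullet> d = 0" "c \<bullet> d = 0"
  shows False
proof -
  let ?S = "{a,b,c,d}"
  have nz: "x \<bullet> x \<noteq> 0" if "x \<noteq> 0" for x :: "real \<times> real \<times> real" using that by simp
  have dist: "a \<noteq> b" "a \<noteq> c" "a \<noteq> d" "b \<noteq> c" "b \<noteq> d" "c \<noteq> d"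
    using assms nz by metis+
  have "pairwise orthogonal ?S"
    using assms unfolding pairwise_def orthogonal_def by (auto simp: inner_commute)
  moreover have "0 \<notin> ?S" using assms by auto
  ultimately have "independent ?S" by (rule pairwise_orthogonal_independent)
  then have "card ?S \<le> DIM(real \<times> real \<times> real)" using independent_bound by blast
  moreover have "card ?S = 4" using dist by simp
  ultimately show False by simp
qed

definition g3 :: "(nat \<Rightarrow> real) \<Rightarrow> real \<times> real \<times> real" where
  "g3 x = (x 0, x 1, x 2)"

lemma sum3: "(\<Sum>i<3. h i) = h 0 + h 1 + (h 2 :: real)" for h :: "nat \<Rightarrow> real"
  by (simp add: numeral_3_eq_3 numeral_2_eq_2 lessThan_Suc)

lemma sum4: "(\<Sum>i<4. h i) = h 0 + h 1 + h 2 + (h 3 :: real)" for h :: "nat \<Rightarrow> real"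
  by (simp add: numeral_eq_Suc lessThan_Suc)

lemma ortho_lower:
  assumes col: "orthogonal_edge_coloring E d f" and d: "d \<le> 3"
    and mem: "e1 \<in> E" "e2 \<in> E" "e3 \<in> E" "e4 \<in> E"
    and ne: "e1 \<noteq> e2" "e1 \<noteq> e3" "e1 \<noteq> e4" "e2 \<noteq> e3" "e2 \<noteq> e4" "e3 \<noteq> e4"
    and int: "e1 \<inter> e2 \<noteq> {}" "e1 \<inter> e3 \<noteq> {}" "e1 \<inter> e4 \<noteq> {}"
      "e2 \<inter> e3 \<noteq> {}" "e2 \<inter> e4 \<noteq> {}" "e3 \<inter> e4 \<noteq> {}"
  shows False
proof -
  have van: "\<forall>i\<ge>d. f e i = 0" and nzx: "\<exists>i<d. f e i \<noteq> 0" if "e \<in> E" for e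
    using col that unfolding orthogonal_edge_coloring_def by auto
  have orth: "(\<Sum>i<d. f e i * f e' i) = 0" if "e \<in> E" "e' \<in> E" "e \<noteq> e'" "e \<inter> e' \<noteq> {}" for e e'
    using col that unfolding orthogonal_edge_coloring_def by auto
  have gnz: "g3 (f e) \<noteq> 0" if eE: "e \<in> E" for e
  proof
    assume z: "g3 (f e) = 0"
    obtain i where i: "i < d" "f e i \<noteq> 0" using nzx[OF eE] by blast
    then have "i < 3" using d by simp
    then have "i = 0 \<or> i = 1 \<or> i = 2" by auto
    then show False using z i(2) by (auto simp: g3_def zero_prod_def)
  qed
  have ginner: "g3 (f e) \<bullet> g3 (f e') = 0" if "e \<in> E" "e' \<in> E" "e \<noteq> e'" "e \<inter> e' \<noteq> {}" for e e'
  proof -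
    have "(\<Sum>i<3. f e i * f e' i) = (\<Sum>i<d. f e i * f e' i)"
      apply (rule sum.mono_neutral_right)
      using d van[OF that(1)] by auto
    also have "\<dots> = 0" using orth[OF that] .
    finally show ?thesis by (simp add: g3_def sum3 inner_Pair add.assoc)
  qed
  show False
    apply (rule four_orth_R3[of "g3 (f e1)" "g3 (f e2)" "g3 (f e3)" "g3 (f e4)"])
    using gnz ginner mem ne int by auto
qed

lemma match_bound:
  fixes K :: "'a set set"
  assumes "finite V" "\<forall>e\<in>K. e \<subseteq> V \<and> card e = 2" "pairwise disjnt K"
  shows "2 * card K \<le> card V"
proof -
  have fin: "\<And>A. A \<in> K \<Longrightarrow> finite A" using assms by (meson finite_subset)
  have "card (\<Union>K) = sum card K" by (rule card_Union_disjoint[OF assms(3) fin])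
  also have "\<dots> = sum (\<lambda>_. 2) K" using assms(2) by (intro sum.cong) auto
  also have "\<dots> = 2 * card K" by simp
  finally have "card (\<Union>K) = 2 * card K" .
  moreover have "card (\<Union>K) \<le> card V" using assms by (intro card_mono) auto
  ultimately show ?thesis by simp
qed

definition pe :: "nat \<times> nat \<Rightarrow> nat set" where "pe p = {fst p, snd p}"

lemma pe_Min: "fst p < snd p \<Longrightarrow> Min (pe p) = fst p" by (simp add: pe_def)
lemma pe_Max: "fst p < snd p \<Longrightarrow> Max (pe p) = snd p" by (simp add: pe_def)

lemma pe_eq: "fst p < snd p \<Longrightarrow> fst q < snd q \<Longrightarrow> pe p = pe q \<longleftrightarrow> p = q"
  by (cases p; cases q) (auto simp: pe_def doubleton_eq_iff)

lemma pe_int: "pe p \<inter> pe q \<noteq> {} \<longleftrightarrow> (fst p = fst q \<or> fst p = snd q \<or> snd p = fst q \<or> snd p = snd q)"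
  by (auto simp: pe_def)

definition Ps :: "(nat \<times> nat) list" where "Ps = [(0,1), (0,2), (0,4), (0,6), (1,3), (1,4), (1,7), (2,3), (2,5), (2,6), (3,5), (3,7), (4,5), (4,8), (5,8), (6,7), (6,8), (7,8)]"

definition LV :: "((nat \<times> nat) \<times> real list) list" where "LV = [((0,1),[0,0,0,1]), ((0,2),[1,1,0,0]), ((0,4),[0,0,1,0]), ((0,6),[1,-1,0,0]), ((1,3),[1,0,-1,0]), ((1,4),[0,1,0,0]), ((1,7),[1,0,1,0]), ((2,3),[1,-1,1,-1]), ((2,5),[1,-1,-1,1]), ((2,6),[0,0,1,1]), ((3,5),[1,1,1,1]), ((3,7),[0,1,0,-1]), ((4,5),[1,0,0,-1]), ((4,8),[1,0,0,1]), ((5,8),[0,1,-1,0]), ((6,7),[1,1,-1,1]), ((6,8),[1,1,1,-1]), ((7,8),[-1,1,1,1])]"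

definition LC :: "((nat \<times> nat) \<times> nat) list" where "LC = [((0,1),0), ((0,2),1), ((0,4),2), ((0,6),3), ((1,3),1), ((1,4),3), ((1,7),2), ((2,3),0), ((2,5),2), ((2,6),4), ((3,5),3), ((3,7),4), ((4,5),0), ((4,8),1), ((5,8),4), ((6,7),0), ((6,8),2), ((7,8),3)]"

lemma Ps_lt: "\<forall>p\<in>set Ps. fst p < snd p" by (simp add: Ps_def)

definition EE :: "nat set set" where "EE = pe ` set Ps"

definition VV :: "nat set" where "VV = {0..8}"

definition vecl :: "real list \<Rightarrow> nat \<Rightarrow> real" where
  "vecl xs i = (if i < length xs then xs ! i else 0)"

definition ff :: "nat set \<Rightarrow> nat \<Rightarrow> real" where
  "ff e = vecl (the (map_of LV (Min e, Max e)))"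

definition cc :: "nat set \<Rightarrow> nat" where
  "cc e = the (map_of LC (Min e, Max e))"

lemma ff_pe: "p \<in> set Ps \<Longrightarrow> ff (pe p) = vecl (the (map_of LV p))"
  using Ps_lt by (simp add: ff_def pe_Min pe_Max)

lemma cc_pe: "p \<in> set Ps \<Longrightarrow> cc (pe p) = the (map_of LC p)"
  using Ps_lt by (simp add: cc_def pe_Min pe_Max)

lemma sg: "simple_graph VV EE"
  unfolding simple_graph_def VV_def EE_def by (auto simp: Ps_def pe_def)

lemma cardEE: "card EE = 18"
proof -
  have "inj_on pe (set Ps)" using Ps_lt pe_eq by (meson inj_onI)
  then have "card EE = card (set Ps)" unfolding EE_def by (rule card_image)
  also have "\<dots> = 18" by (simp add: Ps_def)
  finally show ?thesis .
qed

lemma check_nz0: "\<forall>p\<in>set Ps. (\<exists>i\<in>{0,1,2,3}. (the (map_of LV p)) ! i \<noteq> 0) \<and> length (the (map_of LV p)) = 4"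
  by (simp add: Ps_def LV_def numeral_eq_Suc)

lemma check_nz: "\<forall>p\<in>set Ps. (\<exists>i<4. vecl (the (map_of LV p)) i \<noteq> 0) \<and> length (the (map_of LV p)) = 4"
proof
  fix p assume "p \<in> set Ps"
  then have h: "(\<exists>i\<in>{0,1,2,3}. (the (map_of LV p)) ! i \<noteq> 0)" "length (the (map_of LV p)) = 4"
    using check_nz0 by auto
  then obtain i where "i \<in> {0,1,2,3}" "(the (map_of LV p)) ! i \<noteq> 0" by blast
  then have "i < 4" "vecl (the (map_of LV p)) i \<noteq> 0" using h(2) by (auto simp: vecl_def)
  then show "(\<exists>i<4. vecl (the (map_of LV p)) i \<noteq> 0) \<and> length (the (map_of LV p)) = 4" using h(2) by blast
qed

definition dotl :: "real list \<Rightarrow> real list \<Rightarrow> real" where "dotl u v = sum_list (map2 (*) u v)"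

definition adjp :: "nat \<times> nat \<Rightarrow> nat \<times> nat \<Rightarrow> bool" where
  "adjp p q \<longleftrightarrow> (fst p = fst q \<or> fst p = snd q \<or> snd p = fst q \<or> snd p = snd q)"

lemma t1: "list_all (\<lambda>(p,u). list_all (\<lambda>(q,v). p = q \<or> \<not>(fst p = fst q \<or> fst p = snd q \<or> snd p = fst q \<or> snd p = snd q) \<or> dotl u v = 0) LV) LV"
  by (simp add: LV_def dotl_def)

lemma t2: "list_all (\<lambda>(p,u). list_all (\<lambda>(q,v). p = q \<or> \<not>(fst p = fst q \<or> fst p = snd q \<or> snd p = fst q \<or> snd p = snd q) \<or> u \<noteq> v) LC) LC"
  by (simp add: LC_def)

lemma t3: "list_all (\<lambda>(p,u). length u = 4) LV" by (simp add: LV_def)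
lemma t4: "list_all (\<lambda>(p,u). u < 5) LC" by (simp add: LC_def)

lemma distLV: "distinct (map fst LV)" by (simp add: LV_def)
lemma distLC: "distinct (map fst LC)" by (simp add: LC_def)
lemma PsLV: "set Ps = fst ` set LV" by (simp add: Ps_def LV_def)
lemma PsLC: "set Ps = fst ` set LC" by (simp add: Ps_def LC_def)

lemma sum_dotl: "length u = 4 \<Longrightarrow> length v = 4 \<Longrightarrow> (\<Sum>i<4. vecl u i * vecl v i) = dotl u v"
proof -
  assume "length u = 4" "length v = 4"
  then obtain a b c d a' b' c' d' where "u = [a,b,c,d]" "v = [a',b',c',d']"
    by (auto simp: numeral_eq_Suc length_Suc_conv)
  then show ?thesis by (simp add: sum4 vecl_def dotl_def)
qed

lemma check_orth: "\<forall>p\<in>set Ps. \<forall>q\<in>set Ps. p \<noteq> q \<and> (fst p = fst q \<or> fst p = snd q \<or> snd p = fst q \<or> snd p = snd q)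
   \<longrightarrow> (\<Sum>i<4. vecl (the (map_of LV p)) i * vecl (the (map_of LV q)) i) = 0"
proof (intro ballI impI)
  fix p q assume p: "p \<in> set Ps" and q: "q \<in> set Ps"
    and pq: "p \<noteq> q \<and> (fst p = fst q \<or> fst p = snd q \<or> snd p = fst q \<or> snd p = snd q)"
  obtain u where u: "(p,u) \<in> set LV" using p PsLV by force
  obtain v where v: "(q,v) \<in> set LV" using q PsLV by force
  have mu: "map_of LV p = Some u" by (rule map_of_is_SomeI[OF distLV u])
  have mv: "map_of LV q = Some v" by (rule map_of_is_SomeI[OF distLV v])
  have "length u = 4" "length v = 4" using t3 u v by (auto simp: list_all_iff)
  moreover have "dotl u v = 0" using t1 u v pq by (fastforce simp: list_all_iff)
  ultimately show "(\<Sum>i<4. vecl (the (map_of LV p)) i * vecl (the (map_of LV q)) i) = 0"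
    by (simp add: mu mv sum_dotl)
qed

lemma check_col: "\<forall>p\<in>set Ps. \<forall>q\<in>set Ps. (p \<noteq> q \<and> (fst p = fst q \<or> fst p = snd q \<or> snd p = fst q \<or> snd p = snd q)
   \<longrightarrow> the (map_of LC p) \<noteq> the (map_of LC q)) \<and> the (map_of LC p) < 5"
proof (intro ballI conjI impI)
  fix p q assume p: "p \<in> set Ps" and q: "q \<in> set Ps"
  obtain u where u: "(p,u) \<in> set LC" using p PsLC by force
  obtain v where v: "(q,v) \<in> set LC" using q PsLC by force
  have mu: "map_of LC p = Some u" by (rule map_of_is_SomeI[OF distLC u])
  have mv: "map_of LC q = Some v" by (rule map_of_is_SomeI[OF distLC v])
  show "the (map_of LC p) < 5" using t4 u mu by (auto simp: list_all_iff)
  assume pq: "p \<noteq> q \<and> (fst p = fst q \<or> fst p = snd q \<or> snd p = fst q \<or> snd p = snd q)"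
  have "u \<noteq> v" using t2 u v pq by (fastforce simp: list_all_iff)
  then show "the (map_of LC p) \<noteq> the (map_of LC q)" by (simp add: mu mv)
qed

lemma ocol: "orthogonal_edge_coloring EE 4 ff"
  unfolding orthogonal_edge_coloring_def
proof (intro conjI)
  show "\<forall>e\<in>EE. (\<forall>i\<ge>4. ff e i = 0) \<and> (\<exists>i<4. ff e i \<noteq> 0)"
    unfolding EE_def
  proof (intro ballI, elim imageE)
    fix e p assume p: "p \<in> set Ps" "e = pe p"
    then have "(\<exists>i<4. vecl (the (map_of LV p)) i \<noteq> 0) \<and> length (the (map_of LV p)) = 4"
      using check_nz by blast
    then show "(\<forall>i\<ge>4. ff e i = 0) \<and> (\<exists>i<4. ff e i \<noteq> 0)"
      unfolding p(2) ff_pe[OF p(1)] by (auto simp: vecl_def)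
  qed
  show "\<forall>e\<in>EE. \<forall>e'\<in>EE. e \<noteq> e' \<and> e \<inter> e' \<noteq> {} \<longrightarrow> (\<Sum>i<4. ff e i * ff e' i) = 0"
    unfolding EE_def
  proof (intro ballI impI, elim imageE conjE)
    fix e e' p q assume "p \<in> set Ps" "q \<in> set Ps" "e = pe p" "e' = pe q" "e \<noteq> e'" "e \<inter> e' \<noteq> {}"
    then show "(\<Sum>i<4. ff e i * ff e' i) = 0"
      using check_orth pe_int by (auto simp: ff_pe)
  qed
qed

lemma pcol: "proper_edge_coloring EE 5 cc"
  unfolding proper_edge_coloring_def
proof (intro conjI)
  show "\<forall>e\<in>EE. cc e < 5" using check_col unfolding EE_def by (auto simp: cc_pe)
  show "\<forall>e\<in>EE. \<forall>e'\<in>EE. e \<noteq> e' \<and> e \<inter> e' \<noteq> {} \<longrightarrow> cc e \<noteq> cc e'"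
    unfolding EE_def
  proof (intro ballI impI, elim imageE conjE)
    fix e e' p q assume "p \<in> set Ps" "q \<in> set Ps" "e = pe p" "e' = pe q" "e \<noteq> e'" "e \<inter> e' \<noteq> {}"
    then show "cc e \<noteq> cc e'"
      using check_col pe_int by (auto simp: cc_pe)
  qed
qed

lemma no4: "\<not> proper_edge_coloring EE k c" if "k \<le> 4" for k c
proof
  assume p: "proper_edge_coloring EE k c"
  let ?K = "\<lambda>j. {e\<in>EE. c e = j}"
  have sgv: "finite VV" "\<forall>e\<in>EE. e \<subseteq> VV \<and> card e = 2" using sg unfolding simple_graph_def by auto
  have cv: "card VV = 9" unfolding VV_def by simp
  have bnd: "card (?K j) \<le> 4" for j
  proof -
    have "pairwise disjnt (?K j)"
      using p unfolding pairwise_def disjnt_def proper_edge_coloring_def by auto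
    then have "2 * card (?K j) \<le> card VV" using match_bound[OF sgv(1), of "?K j"] sgv(2) by auto
    then show ?thesis using cv by simp
  qed
  have "EE = (\<Union>j\<in>{..<k}. ?K j)" using p unfolding proper_edge_coloring_def by auto
  then have "card EE \<le> (\<Sum>j<k. card (?K j))" using card_UN_le[of "{..<k}" ?K] by simp
  also have "\<dots> \<le> (\<Sum>j<k. 4)" by (intro sum_mono bnd)
  also have "\<dots> \<le> 16" using that by simp
  finally show False using cardEE by simp
qed

lemma mem4: "{0,1} \<in> EE" "{0,2} \<in> EE" "{0,4} \<in> EE" "{0,6} \<in> EE"
proof -
  have "pe (0,1) \<in> EE" "pe (0,2) \<in> EE" "pe (0,4) \<in> EE" "pe (0,6) \<in> EE"
    unfolding EE_def by (rule imageI; simp add: Ps_def)+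
  then show "{0,1} \<in> EE" "{0,2} \<in> EE" "{0,4} \<in> EE" "{0,6} \<in> EE" by (simp_all add: pe_def)
qed

theorem mainTheorem6:
  shows "\<exists>(V::nat set) E. simple_graph V E \<and> orthogonal_index E = 4 \<and> chromatic_index E = 5"
proof (intro exI conjI)
  show "simple_graph VV EE" by (rule sg)
  show "orthogonal_index EE = 4"
    unfolding orthogonal_index_def
  proof (rule Least_equality)
    show "\<exists>f. orthogonal_edge_coloring EE 4 f" using ocol by blast
    fix d assume "\<exists>f. orthogonal_edge_coloring EE d f"
    then obtain f where f: "orthogonal_edge_coloring EE d f" by blast
    show "4 \<le> d"
    proof (rule ccontr)
      assume "\<not> 4 \<le> d"
      then have "d \<le> 3" by simp
      show False
        by (rule ortho_lower[OF f \<open>d \<le> 3\<close> mem4]) (auto simp: doubleton_eq_iff)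
    qed
  qed
  show "chromatic_index EE = 5"
    unfolding chromatic_index_def
  proof (rule Least_equality)
    show "\<exists>c. proper_edge_coloring EE 5 c" using pcol by blast
    fix k assume "\<exists>c. proper_edge_coloring EE k c"
    then obtain c where "proper_edge_coloring EE k c" by blast
    then show "5 \<le> k" using no4[of k c] by linarith
  qed
qed

end
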